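(* Let $\mathcal{A}=(S,\mathcal{P}_1,\dots,\mathcal{P}_n)$ be an Aumann structure and let $\mathbf{C}(\mathcal{A})=(\mathcal{P}(S),\sqsubseteq,(K_i)_{i\in\{1,\dots,n\}})$ be its induced spatial constraint system, with distributed spaces $(\Delta_I)_{I\subseteq\{1,\dots,n\}}$. Then $\Delta_I=D_I$ for every $I\subseteq\{1,\dots,n\}$.
   Context: An Aumann structure $(S,\mathcal{P}_1,\dots,\mathcal{P}_n)$ consists of a set $S$ of states and, for each agent $i$, a partition $\mathcal{P}_i$ of $S$; $\mathcal{P}_i(s)$ denotes the block of $\mathcal{P}_i$ containing $s$. Events are subsets of $S$. Define $K_i(e)=\{s\in S: \mathcal{P}_i(s)\subseteq e\}$ and $D_I(e)=\{s\in S : \bigcap_{i\in I}\mathcal{P}_i(s)\subseteq e\}$ (with the intersection over the empty family taken to be $S$). The induced structure $\mathbf{C}(\mathcal{A})$ has constraints $\mathcal{P}(S)$ ordered by $e_1\sqsubseteq e_2$ iff $e_2\subseteq e_1$ (so join is intersection, bottom is $S$, top is $\emptyset$), and agent $i$'s function is $K_i$. In a complete lattice $(\mathrm{Con},\sqsubseteq)$ a space function is a self-map preserving joins of directed sets, binary joins and the bottom; for a family of space functions $(s_i)_{i\in G}$, the distributed space of $I\subseteq G$ is $\Delta_I=\max\{f \text{ space function}: f(c)\sqsubseteq s_i(c) \text{ for all } c \text{ and all } i\in I\}$ (this maximum exists). *)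

theory Defs
  imports Main "HOL-Library.Disjoint_Sets"
begin

definition aumann_structure :: "'a set \<Rightarrow> nat \<Rightarrow> (nat \<Rightarrow> 'a set set) \<Rightarrow> bool" where
  "aumann_structure S n P \<longleftrightarrow> (\<forall>i\<in>{1..n}. partition_on S (P i))"

definition block :: "(nat \<Rightarrow> 'a set set) \<Rightarrow> nat \<Rightarrow> 'a \<Rightarrow> 'a set" where
  "block P i s = (THE B. B \<in> P i \<and> s \<in> B)"

definition Kop :: "'a set \<Rightarrow> (nat \<Rightarrow> 'a set set) \<Rightarrow> nat \<Rightarrow> 'a set \<Rightarrow> 'a set" where
  "Kop S P i e = {s \<in> S. block P i s \<subseteq> e}"

text \<open>Distributed knowledge operator D_I (empty intersection taken to be S).\<close>
definition Dop :: "'a set \<Rightarrow> (nat \<Rightarrow> 'a set set) \<Rightarrow> nat set \<Rightarrow> 'a set \<Rightarrow> 'a set" where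
  "Dop S P I e = {s \<in> S. S \<inter> (\<Inter>i\<in>I. block P i s) \<subseteq> e}"

text \<open>The constraint lattice is Pow S ordered by reverse inclusion:
  e1 \<sqsubseteq> e2 iff e2 \<subseteq> e1; join = intersection, bottom = S.
  A directed set (w.r.t. this order) is a nonempty family D \<subseteq> Pow S such that any two
  members have an upper bound in D, i.e. a member contained in both; its join is S \<inter> \<Inter>D.\<close>
definition directed_con :: "'a set \<Rightarrow> 'a set set \<Rightarrow> bool" where
  "directed_con S D \<longleftrightarrow> D \<subseteq> Pow S \<and> D \<noteq> {} \<and>
     (\<forall>a\<in>D. \<forall>b\<in>D. \<exists>c\<in>D. c \<subseteq> a \<and> c \<subseteq> b)"

definition space_function :: "'a set \<Rightarrow> ('a set \<Rightarrow> 'a set) \<Rightarrow> bool" where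
  "space_function S f \<longleftrightarrow>
     (\<forall>c. c \<subseteq> S \<longrightarrow> f c \<subseteq> S) \<and>
     f S = S \<and>
     (\<forall>a b. a \<subseteq> S \<longrightarrow> b \<subseteq> S \<longrightarrow> f (a \<inter> b) = f a \<inter> f b) \<and>
     (\<forall>D. directed_con S D \<longrightarrow> f (S \<inter> \<Inter>D) = S \<inter> (\<Inter>c\<in>D. f c))"

text \<open>f is the distributed space Delta_I of the family (s i): the maximum (pointwise, w.r.t.
  reverse inclusion) among space functions g with g c \<sqsubseteq> s i c for all c and all i in I.\<close>
definition is_distributed_space ::
  "'a set \<Rightarrow> (nat \<Rightarrow> 'a set \<Rightarrow> 'a set) \<Rightarrow> nat set \<Rightarrow> ('a set \<Rightarrow> 'a set) \<Rightarrow> bool" where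
  "is_distributed_space S s I f \<longleftrightarrow>
     space_function S f \<and>
     (\<forall>c. c \<subseteq> S \<longrightarrow> (\<forall>i\<in>I. s i c \<subseteq> f c)) \<and>
     (\<forall>g. space_function S g \<and> (\<forall>c. c \<subseteq> S \<longrightarrow> (\<forall>i\<in>I. s i c \<subseteq> g c))
          \<longrightarrow> (\<forall>c. c \<subseteq> S \<longrightarrow> f c \<subseteq> g c))"

end

theory Submission
  imports Defs
begin

lemma block_sub:
  assumes "partition_on S (P i)" "s \<in> S"
  shows "block P i s \<subseteq> S"
proof -
  have "s \<in> \<Union>(P i)" using partition_onD1[OF assms(1)] assms(2) by simp
  then obtain B where B2: "s \<in> B" "B \<in> P i" by (rule UnionE)
  have B: "B \<in> P i" "s \<in> B" using B2 by simp_all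
  have uniq: "C = B" if "C \<in> P i" "s \<in> C" for C
  proof (rule ccontr)
    assume "C \<noteq> B"
    then have "C \<inter> B = {}"
      using disjointD[OF partition_onD2[OF assms(1)] that(1) B(1)] by simp
    then show False using that(2) B(2) by auto
  qed
  have ex: "\<exists>!B. B \<in> P i \<and> s \<in> B"
    apply (rule ex1I[of _ B])
    using B uniq by blast+
  have "block P i s \<in> P i \<and> s \<in> block P i s" unfolding block_def by (rule theI'[OF ex])
  then have "block P i s \<in> P i" by (rule conjunct1)
  then have "block P i s \<subseteq> \<Union>(P i)" by (rule Union_upper)
  then show ?thesis using partition_onD1[OF assms(1)] by simp
qed

lemma sf_mono:
  assumes "space_function S g" "a \<subseteq> b" "b \<subseteq> S"
  shows "g a \<subseteq> g b"
proof -
  have "a \<subseteq> S" using assms by simp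
  then have "g (a \<inter> b) = g a \<inter> g b" using assms(1,3) unfolding space_function_def by simp
  moreover have "a \<inter> b = a" using assms by auto
  ultimately show ?thesis by auto
qed

lemma Dop_sf: "space_function S (Dop S P I)"
  unfolding space_function_def
proof (intro conjI allI impI)
  fix D assume d: "directed_con S D"
  then have ne: "D \<noteq> {}" unfolding directed_con_def by simp
  show "Dop S P I (S \<inter> \<Inter>D) = S \<inter> (\<Inter>c\<in>D. Dop S P I c)"
    unfolding Dop_def using ne by auto
next
  fix a b :: "'a set"
  show "Dop S P I (a \<inter> b) = Dop S P I a \<inter> Dop S P I b"
    unfolding Dop_def by auto
next
  fix c :: "'a set"
  show "Dop S P I c \<subseteq> S" unfolding Dop_def by auto
next
  show "Dop S P I S = S" unfolding Dop_def by auto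
qed

lemma key:
  assumes g: "space_function S g"
    and gk: "\<And>c i. c \<subseteq> S \<Longrightarrow> i \<in> I \<Longrightarrow> Kop S P i c \<subseteq> g c"
    and xS: "x \<in> S"
    and bs: "\<And>i. i \<in> I \<Longrightarrow> block P i x \<subseteq> S"
    and fin: "finite J" and JI0: "J \<subseteq> I"
  shows "x \<in> g (S \<inter> (\<Inter>i\<in>J. block P i x))"
  using fin JI0
proof (induction J rule: finite_induct)
  case empty
  have "g S = S" using g unfolding space_function_def by simp
  then show ?case using xS by simp
next
  case (insert j J)
  have jI: "j \<in> I" and JI: "J \<subseteq> I" using insert.prems by auto
  have "x \<in> Kop S P j (block P j x)" unfolding Kop_def using xS by simp
  then have x1: "x \<in> g (block P j x)" using gk[OF bs[OF jI] jI] by auto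
  have x2: "x \<in> g (S \<inter> (\<Inter>i\<in>J. block P i x))" using insert.IH[OF JI] .
  have eq: "S \<inter> (\<Inter>i\<in>insert j J. block P i x) = block P j x \<inter> (S \<inter> (\<Inter>i\<in>J. block P i x))"
    using bs[OF jI] by auto
  have s1: "block P j x \<subseteq> S" using bs[OF jI] .
  have s2: "S \<inter> (\<Inter>i\<in>J. block P i x) \<subseteq> S" by auto
  have "g (block P j x \<inter> (S \<inter> (\<Inter>i\<in>J. block P i x))) = g (block P j x) \<inter> g (S \<inter> (\<Inter>i\<in>J. block P i x))"
    using g s1 s2 unfolding space_function_def by simp
  then show ?case using eq x1 x2 by simp
qed

theorem mainTheorem8:
  fixes S :: "'a set" and n :: nat and P :: "nat \<Rightarrow> 'a set set" and I :: "nat set"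
  assumes "aumann_structure S n P"
    and "I \<subseteq> {1..n}"
  shows "is_distributed_space S (Kop S P) I (Dop S P I)"
proof -
  have part: "\<And>i. i \<in> I \<Longrightarrow> partition_on S (P i)"
    using assms unfolding aumann_structure_def by auto
  have finI: "finite I" using assms(2) finite_subset by auto
  have up: "\<forall>c. c \<subseteq> S \<longrightarrow> (\<forall>i\<in>I. Kop S P i c \<subseteq> Dop S P I c)"
    unfolding Kop_def Dop_def by auto
  have least: "\<forall>c. c \<subseteq> S \<longrightarrow> Dop S P I c \<subseteq> g c"
    if g: "space_function S g" and gk: "\<forall>c. c \<subseteq> S \<longrightarrow> (\<forall>i\<in>I. Kop S P i c \<subseteq> g c)" for g
  proof (intro allI impI subsetI)
    fix c x assume c: "c \<subseteq> S" and x: "x \<in> Dop S P I c"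
    then have xS: "x \<in> S" and sub: "S \<inter> (\<Inter>i\<in>I. block P i x) \<subseteq> c"
      unfolding Dop_def by auto
    have bs: "\<And>i. i \<in> I \<Longrightarrow> block P i x \<subseteq> S" by (rule block_sub[OF part xS])
    have gk': "\<And>c i. c \<subseteq> S \<Longrightarrow> i \<in> I \<Longrightarrow> Kop S P i c \<subseteq> g c" using gk by simp
    have "x \<in> g (S \<inter> (\<Inter>i\<in>I. block P i x))" using key[OF g gk' xS bs finI order_refl] by simp
    moreover have "g (S \<inter> (\<Inter>i\<in>I. block P i x)) \<subseteq> g c" using sf_mono[OF g sub c] .
    ultimately show "x \<in> g c" by auto
  qed
  have least': "\<forall>g. space_function S g \<and> (\<forall>c. c \<subseteq> S \<longrightarrow> (\<forall>i\<in>I. Kop S P i c \<subseteq> g c))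
          \<longrightarrow> (\<forall>c. c \<subseteq> S \<longrightarrow> Dop S P I c \<subseteq> g c)"
  proof (rule allI, rule impI)
    fix g assume h: "space_function S g \<and> (\<forall>c. c \<subseteq> S \<longrightarrow> (\<forall>i\<in>I. Kop S P i c \<subseteq> g c))"
    show "\<forall>c. c \<subseteq> S \<longrightarrow> Dop S P I c \<subseteq> g c"
      using least[OF conjunct1[OF h] conjunct2[OF h]] .
  qed
  show ?thesis unfolding is_distributed_space_def
    by (intro conjI Dop_sf up least')
qed

end
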